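(* Let $C\subseteq\mathbb{R}^n$ be a nonempty compact convex set and let $f:\mathbb{R}^n\to\mathbb{R}$ be an abs-smooth function such that, for every $x\in C$, its piecewise linearization $f_{PL,x}$ is convex on $C$. Let $\mathcal{C}_f$ be the curvature constant of $f$ on $C$ and let $x^*$ be a minimizer of $f$ on $C$. Let $x\in C$, $\alpha\in(0,1]$ and $\epsilon\ge0$ be arbitrary, and let $v\in C$ satisfy $$\Delta f(x;\alpha(v-x)) \le \min_{w\in C}\Delta f(x;\alpha(w-x)) + \tfrac12\epsilon\alpha^2\,\mathcal{C}_f .$$ Then $$f(x)-f(x^* ) \le \frac{-\Delta f(x;\alpha(v-x))}{\alpha} + \frac12\big(1+\alpha\epsilon\big)\mathcal{C}_f .$$
   Context: A function $f:\mathbb{R}^n\to\mathbb{R}$ is abs-smooth if it is locally Lipschitz and admits an abs-smooth form: for some $s\in\mathbb{N}\cup\{0\}$ there are $F=(F_1,\dots,F_s)\in\mathcal{C}^d(\mathbb{R}^{n+s+s},\mathbb{R}^s)$ and $\varphi\in\mathcal{C}^d(\mathbb{R}^{n+s},\mathbb{R})$ with $d\ge1$ such that $y=f(x)$ is computed by $z_i=F_i(x,z_1,\dots,z_{i-1},|z_1|,\dots,|z_{i-1}|)$ for $i=1,\dots,s$ and $y=\varphi(x,z)$. For a point $\mathring{x}$, write $\mathring z=z(\mathring x)$ and let $Z=\partial_x F$, $M=\partial_z F$, $L=\partial_{|z|}F$ (evaluated at $(\mathring x,\mathring z,|\mathring z|)$; $M,L$ strictly lower triangular), $a=\partial_x\varphi$,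 $b=\partial_z\varphi$ (evaluated at $(\mathring x,\mathring z)$). The piecewise linearization of $f$ at $\mathring x$ is $f_{PL,\mathring x}(x)=d_0+a^Tx+b^Tz$ where $z$ solves $z=c+Zx+Mz+L|z|$ (uniquely, recursively), with constants $c,d_0$ chosen so that $f_{PL,\mathring x}(\mathring x)=f(\mathring x)$ (namely $c=\mathring z-Z\mathring x-M\mathring z-L|\mathring z|$, $d_0=f(\mathring x)-a^T\mathring x-b^T\mathring z$). The abs-linearization is $\Delta f(\mathring x;x-\mathring x):=f_{PL,\mathring x}(x)-f(\mathring x)$. "$f_{PL,x}$ convex on $C$" means $f_{PL,x}(\lambda y+(1-\lambda)w)\le\lambda f_{PL,x}(y)+(1-\lambda)f_{PL,x}(w)$ for all $y,w\in C$, $\lambda\in[0,1]$. The curvature constant of $f$ on $C$ is $$\mathcal{C}_f:=\sup_{x,v\in C,\ \alpha\in(0,1],\ y=x+\alpha(v-x)}\frac{2}{\alpha^2}\big|f(y)-f(x)-\Delta f(x;y-x)\big|,$$ which is finite for compact $C$. *)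

theory Defs
  imports "HOL-Analysis.Analysis" "HOL-Library.Extended_Real"
begin

text \<open>Vectors: x in R^n is real^'n; the switching vector z in R^s is real^('s::{finite,linorder}),
  where the index type 's is finite and linearly ordered (ordering of z_1,...,z_s).\<close>

definition vabs :: "real^('s::{finite,linorder}) \<Rightarrow> real^('s::{finite,linorder})" where
  "vabs z = (\<chi> j. \<bar>z $ j\<bar>)"

definition C1_map :: "('a::real_normed_vector \<Rightarrow> 'b::real_normed_vector) \<Rightarrow> bool" where
  "C1_map G \<longleftrightarrow> (\<exists>G'. (\<forall>p. (G has_derivative blinfun_apply (G' p)) (at p)) \<and> continuous_on UNIV G')"

text \<open>F_i depends only on x, z_1..z_{i-1}, |z_1|..|z_{i-1}| (third argument = |z|-slot).\<close>
definition lower_triangular ::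
  "(real^'n \<Rightarrow> real^('s::{finite,linorder}) \<Rightarrow> real^('s::{finite,linorder}) \<Rightarrow> real^('s::{finite,linorder})) \<Rightarrow> bool" where
  "lower_triangular F \<longleftrightarrow>
     (\<forall>x z z' w w' i. (\<forall>j<i. z $ j = z' $ j \<and> w $ j = w' $ j) \<longrightarrow> F x z w $ i = F x z' w' $ i)"

text \<open>The switching vector z(x): the (recursively unique) solution of z = F(x, z, |z|).\<close>
definition switch_vec ::
  "(real^'n \<Rightarrow> real^('s::{finite,linorder}) \<Rightarrow> real^('s::{finite,linorder}) \<Rightarrow> real^('s::{finite,linorder})) \<Rightarrow> real^'n \<Rightarrow> real^('s::{finite,linorder})" where
  "switch_vec F x = (THE z. z = F x z (vabs z))"

definition locally_lipschitz :: "(real^'n \<Rightarrow> real) \<Rightarrow> bool" where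
  "locally_lipschitz f \<longleftrightarrow> (\<forall>x. \<exists>e>0. \<exists>K. K-lipschitz_on (ball x e) f)"

definition abs_smooth_form ::
  "(real^'n \<Rightarrow> real) \<Rightarrow> (real^'n \<Rightarrow> real^('s::{finite,linorder}) \<Rightarrow> real^('s::{finite,linorder}) \<Rightarrow> real^('s::{finite,linorder}))
    \<Rightarrow> (real^'n \<Rightarrow> real^('s::{finite,linorder}) \<Rightarrow> real) \<Rightarrow> bool" where
  "abs_smooth_form f F \<phi> \<longleftrightarrow>
     locally_lipschitz f \<and>
     C1_map (\<lambda>(x, z, w). F x z w) \<and> C1_map (\<lambda>(x, z). \<phi> x z) \<and>
     lower_triangular F \<and>
     (\<forall>x. f x = \<phi> x (switch_vec F x))"

text \<open>With D = derivative of (x,z,w) |-> F x z w at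
  (x0, z0, |z0|), i.e. D(h,k,l) = Z h + M k + L l, the equation z = c + Z x + M z + L|z|
  with c = z0 - Z x0 - M z0 - L|z0| reads z = z0 + D(x - x0, z - z0, |z| - |z0|);
  and f_PL(x) = d0 + a^T x + b^T z with d0 = f(x0) - a^T x0 - b^T z0 reads
  f(x0) + Dphi(x - x0, z - z0), Dphi = derivative of (x,z) |-> phi x z at (x0,z0).\<close>
definition pl_switch ::
  "(real^'n \<Rightarrow> real^('s::{finite,linorder}) \<Rightarrow> real^('s::{finite,linorder}) \<Rightarrow> real^('s::{finite,linorder})) \<Rightarrow> real^'n \<Rightarrow> real^'n \<Rightarrow> real^('s::{finite,linorder})" where
  "pl_switch F x0 x =
    (let z0 = switch_vec F x0;
         D = frechet_derivative (\<lambda>(x, z, w). F x z w) (at (x0, z0, vabs z0))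
     in THE z. z = z0 + D (x - x0, z - z0, vabs z - vabs z0))"

definition f_PL ::
  "(real^'n \<Rightarrow> real) \<Rightarrow> (real^'n \<Rightarrow> real^('s::{finite,linorder}) \<Rightarrow> real^('s::{finite,linorder}) \<Rightarrow> real^('s::{finite,linorder}))
    \<Rightarrow> (real^'n \<Rightarrow> real^('s::{finite,linorder}) \<Rightarrow> real) \<Rightarrow> real^'n \<Rightarrow> real^'n \<Rightarrow> real" where
  "f_PL f F \<phi> x0 x =
    (let z0 = switch_vec F x0;
         D\<phi> = frechet_derivative (\<lambda>(x, z). \<phi> x z) (at (x0, z0))
     in f x0 + D\<phi> (x - x0, pl_switch F x0 x - z0))"

definition abs_lin ::
  "(real^'n \<Rightarrow> real) \<Rightarrow> (real^'n \<Rightarrow> real^('s::{finite,linorder}) \<Rightarrow> real^('s::{finite,linorder}) \<Rightarrow> real^('s::{finite,linorder}))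
    \<Rightarrow> (real^'n \<Rightarrow> real^('s::{finite,linorder}) \<Rightarrow> real) \<Rightarrow> real^'n \<Rightarrow> real^'n \<Rightarrow> real" where
  "abs_lin f F \<phi> x0 d = f_PL f F \<phi> x0 (x0 + d) - f x0"

definition curvature_const ::
  "(real^'n \<Rightarrow> real) \<Rightarrow> (real^'n \<Rightarrow> real^('s::{finite,linorder}) \<Rightarrow> real^('s::{finite,linorder}) \<Rightarrow> real^('s::{finite,linorder}))
    \<Rightarrow> (real^'n \<Rightarrow> real^('s::{finite,linorder}) \<Rightarrow> real) \<Rightarrow> (real^'n) set \<Rightarrow> ereal" where
  "curvature_const f F \<phi> C =
    (SUP (x, v, \<alpha>) \<in> {(x, v, \<alpha>). x \<in> C \<and> v \<in> C \<and> \<alpha> \<in> {0<..1}}.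
       (let y = x + \<alpha> *\<^sub>R (v - x)
        in ereal (2 / \<alpha>\<^sup>2 * \<bar>f y - f x - abs_lin f F \<phi> x (y - x)\<bar>)))"

end

theory Submission
  imports Defs
begin

lemma curv_bound:
  assumes "a \<in> C" "b \<in> C" "0 < t" "t \<le> 1"
  shows "ereal (2 / t\<^sup>2 * \<bar>f (a + t *\<^sub>R (b - a)) - f a - abs_lin f F \<phi> a (t *\<^sub>R (b - a))\<bar>)
         \<le> curvature_const f F \<phi> C"
  unfolding curvature_const_def
  by (rule SUP_upper2[where i="(a, b, t)"]) (use assms in auto)

theorem mainTheorem2:
  fixes f :: "real^'n \<Rightarrow> real"
    and F :: "real^'n \<Rightarrow> real^('s::{finite,linorder}) \<Rightarrow> real^('s::{finite,linorder}) \<Rightarrow> real^('s::{finite,linorder})"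
    and \<phi> :: "real^'n \<Rightarrow> real^('s::{finite,linorder}) \<Rightarrow> real"
    and C :: "(real^'n) set"
    and xstar x v :: "real^'n" and \<alpha> \<epsilon> :: real
  assumes "C \<noteq> {}" and "compact C" and "convex C"
    and "abs_smooth_form f F \<phi>"
    and "\<forall>y\<in>C. convex_on C (f_PL f F \<phi> y)"
    and "xstar \<in> C" and "\<forall>y\<in>C. f xstar \<le> f y"
    and "x \<in> C" and "0 < \<alpha>" and "\<alpha> \<le> 1" and "0 \<le> \<epsilon>"
    and "v \<in> C"
    and "ereal (abs_lin f F \<phi> x (\<alpha> *\<^sub>R (v - x)))
           \<le> (INF w\<in>C. ereal (abs_lin f F \<phi> x (\<alpha> *\<^sub>R (w - x))))
             + ereal (1/2 * \<epsilon> * \<alpha>\<^sup>2) * curvature_const f F \<phi> C"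
  shows "ereal (f x - f xstar)
           \<le> ereal (- abs_lin f F \<phi> x (\<alpha> *\<^sub>R (v - x)) / \<alpha>)
             + ereal (1/2 * (1 + \<alpha> * \<epsilon>)) * curvature_const f F \<phi> C"
proof -
  define K where "K = curvature_const f F \<phi> C"
  define D where "D = abs_lin f F \<phi> x"
  have K0: "ereal 0 \<le> K"
    by (rule order_trans[OF _ curv_bound[OF assms(8) assms(8), of 1 f F \<phi>, folded K_def]]) simp_all
  show ?thesis
  proof (cases K)
    case PInf
    have inf: "ereal (1/2 * (1 + \<alpha> * \<epsilon>)) * K = \<infinity>"
    proof -
      have "0 < 1 + \<alpha> * \<epsilon>" using assms(9,11) by (simp add: add_pos_nonneg)
      then show ?thesis using PInf by simp
    qed
    show ?thesis unfolding K_def[symmetric] inf by simp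
  next
    case MInf with K0 show ?thesis by simp
  next
    case (real k)
    have k0: "0 \<le> k" using K0 real by simp
    have cb: "2 / t\<^sup>2 * \<bar>f (a + t *\<^sub>R (b - a)) - f a - abs_lin f F \<phi> a (t *\<^sub>R (b - a))\<bar> \<le> k"
      if "a \<in> C" "b \<in> C" "0 < t" "t \<le> 1" for a b t
      using curv_bound[OF that, of f F \<phi>] real unfolding K_def by simp
    have cb2: "\<bar>f (a + t *\<^sub>R (b - a)) - f a - abs_lin f F \<phi> a (t *\<^sub>R (b - a))\<bar> \<le> k * t\<^sup>2 / 2"
      if "a \<in> C" "b \<in> C" "0 < t" "t \<le> 1" for a b t
      using cb[OF that] that(3) by (simp add: field_simps)
    have D0: "D 0 = 0"
    proof (rule ccontr)
      assume "D 0 \<noteq> 0"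
      hence p: "\<bar>D 0\<bar> > 0" by simp
      define t where "t = min 1 (\<bar>D 0\<bar> / (k + 1))"
      have t0: "0 < t" "t \<le> 1" using p k0 by (auto simp: t_def)
      have "\<bar>D 0\<bar> \<le> k * t\<^sup>2 / 2" using cb2[OF assms(8) assms(8) t0] by (simp add: D_def)
      also have "\<dots> \<le> k * t / 2"
        using t0 k0 by (simp add: power2_eq_square mult_left_mono mult_right_le_one_le)
      also have "\<dots> < (k + 1) * t" using t0 k0 by (simp add: field_simps add_nonneg_pos)
      also have "\<dots> \<le> (k + 1) * (\<bar>D 0\<bar> / (k + 1))"
        using k0 by (intro mult_left_mono) (auto simp: t_def)
      also have "\<dots> = \<bar>D 0\<bar>" using k0 by simp
      finally show False by simp
    qed
    have PLx: "f_PL f F \<phi> x x = f x" using D0 by (simp add: D_def abs_lin_def)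
    have cvx: "f_PL f F \<phi> x ((1 - \<alpha>) *\<^sub>R x + \<alpha> *\<^sub>R xstar) \<le> (1 - \<alpha>) * f_PL f F \<phi> x x + \<alpha> * f_PL f F \<phi> x xstar"
      using convex_onD[OF assms(5)[rule_format, OF assms(8)]] assms(6,8,9,10) by simp
    have eq1: "(1 - \<alpha>) *\<^sub>R x + \<alpha> *\<^sub>R xstar = x + \<alpha> *\<^sub>R (xstar - x)" by (simp add: algebra_simps)
    have c1: "D (\<alpha> *\<^sub>R (xstar - x)) \<le> \<alpha> * D (xstar - x)"
      using cvx PLx unfolding eq1 D_def abs_lin_def by (simp add: algebra_simps)
    have c2: "D (xstar - x) \<le> f xstar - f x + k / 2"
      using cb2[OF assms(8) assms(6), of 1] by (simp add: D_def abs_if split: if_splits)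
    have "ereal (D (\<alpha> *\<^sub>R (v - x))) \<le> ereal (D (\<alpha> *\<^sub>R (xstar - x))) + ereal (1/2 * \<epsilon> * \<alpha>\<^sup>2) * ereal k"
    proof -
      have "(INF w\<in>C. ereal (D (\<alpha> *\<^sub>R (w - x)))) \<le> ereal (D (\<alpha> *\<^sub>R (xstar - x)))"
        by (rule INF_lower) (rule assms(6))
      have h: "ereal (D (\<alpha> *\<^sub>R (v - x))) \<le> (INF w\<in>C. ereal (D (\<alpha> *\<^sub>R (w - x)))) + ereal (1/2 * \<epsilon> * \<alpha>\<^sup>2) * ereal k"
        using assms(13) real[unfolded K_def] unfolding D_def by (simp only:)
      show ?thesis by (rule order_trans[OF h add_right_mono]) fact
    qed
    hence c3: "D (\<alpha> *\<^sub>R (v - x)) \<le> D (\<alpha> *\<^sub>R (xstar - x)) + 1/2 * \<epsilon> * \<alpha>\<^sup>2 * k" by simp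
    have "D (\<alpha> *\<^sub>R (v - x)) \<le> \<alpha> * (f xstar - f x + k / 2 + 1/2 * \<epsilon> * \<alpha> * k)"
      using c1 c2 c3 assms(9) mult_left_mono[OF c2, of \<alpha>]
      by (simp add: algebra_simps power2_eq_square)
    hence "D (\<alpha> *\<^sub>R (v - x)) / \<alpha> \<le> f xstar - f x + k / 2 + 1/2 * \<epsilon> * \<alpha> * k"
      using assms(9) by (simp add: divide_le_eq mult.commute)
    hence "f x - f xstar \<le> - D (\<alpha> *\<^sub>R (v - x)) / \<alpha> + 1/2 * (1 + \<alpha> * \<epsilon>) * k"
      by (simp add: algebra_simps)
    then show ?thesis using real unfolding K_def D_def by simp
  qed
qed

end
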